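(* For every $r\in\mathbb N$ and every finite graph $G$, \[\mathrm{adm}_r(G)+1\le \mathrm{copw}_r(G)\le \mathrm{wcol}_{2r}(G)+1.\]
   Context: Graphs are finite, simple, undirected. For $r\in\mathbb N$ and $k\ge 1$, the Cops and Robber game of radius $r$ and width $k$ on $G$: let $S_0=\emptyset$ and let the robber choose $v_0\in V(G)$; in round $i\ge1$ the cops announce $S_i\subseteq V(G)$ with $|S_i|\le k$, and then the robber moves from $v_{i-1}$ to $v_i$ along a path of length at most $r$ (length $0$ allowed) containing no vertex of $S_{i-1}\cap S_i$. The cops win if $v_i\in S_i$ for some $i$. $\mathrm{copw}_r(G)$ is the least $k$ for which the cops have a winning strategy. The $r$-weak coloring number $\mathrm{wcol}_r(G)$ is the least $k$ such that there is a total order $<$ on $V(G)$ in which, for every vertex $v$, at most $k$ vertices $w<v$ are weakly $r$-reachable from $v$, i.e. there is a path of length at most $r$ from $v$ to $w$ on which $w$ is the $<$-smallest vertex. The $r$-admissibility $\mathrm{adm}_r(G)$ is the least $k$ such that there is a total order $<$ on $V(G)$ such that for every $v$ there are no more than $k$ paths of length at most $r$ starting at $v$, ending at some vertex $w<v$, and pairwise sharing only the vertex $v$. *)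

theory Defs
  imports Main
begin

definition simple_graph :: "'a set \<Rightarrow> ('a \<Rightarrow> 'a \<Rightarrow> bool) \<Rightarrow> bool" where
  "simple_graph V E \<longleftrightarrow> finite V \<and>
     (\<forall>x y. E x y \<longrightarrow> x \<in> V \<and> y \<in> V \<and> x \<noteq> y) \<and>
     (\<forall>x y. E x y \<longrightarrow> E y x)"

definition gpath :: "'a set \<Rightarrow> ('a \<Rightarrow> 'a \<Rightarrow> bool) \<Rightarrow> 'a list \<Rightarrow> bool" where
  "gpath V E p \<longleftrightarrow> p \<noteq> [] \<and> distinct p \<and> set p \<subseteq> V \<and> successively E p"

definition plen :: "'a list \<Rightarrow> nat" where
  "plen p = length p - 1"

text \<open>Robber move from a to b with at most r edges, avoiding the set X (= S_{i-1} \<inter> S_i).\<close>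
definition robber_move ::
  "'a set \<Rightarrow> ('a \<Rightarrow> 'a \<Rightarrow> bool) \<Rightarrow> nat \<Rightarrow> 'a set \<Rightarrow> 'a \<Rightarrow> 'a \<Rightarrow> bool" where
  "robber_move V E r X a b \<longleftrightarrow>
     (\<exists>p. gpath V E p \<and> hd p = a \<and> last p = b \<and> plen p \<le> r \<and> set p \<inter> X = {})"

text \<open>Cop positions in round i induced by a cop strategy sigma (a function of the robber's
  history v_0,...,v_{i-1}); S_0 is empty.\<close>
definition cop_pos :: "('a list \<Rightarrow> 'a set) \<Rightarrow> (nat \<Rightarrow> 'a) \<Rightarrow> nat \<Rightarrow> 'a set" where
  "cop_pos \<sigma> v i = (if i = 0 then {} else \<sigma> (map v [0..<i]))"

definition cops_win :: "'a set \<Rightarrow> ('a \<Rightarrow> 'a \<Rightarrow> bool) \<Rightarrow> nat \<Rightarrow> nat \<Rightarrow> bool" where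
  "cops_win V E r k \<longleftrightarrow>
     (\<exists>\<sigma> :: 'a list \<Rightarrow> 'a set.
        (\<forall>h. \<sigma> h \<subseteq> V \<and> card (\<sigma> h) \<le> k) \<and>
        (\<forall>v :: nat \<Rightarrow> 'a.
           v 0 \<in> V \<and>
           (\<forall>i. robber_move V E r (cop_pos \<sigma> v i \<inter> cop_pos \<sigma> v (Suc i)) (v i) (v (Suc i)))
           \<longrightarrow> (\<exists>i. v i \<in> cop_pos \<sigma> v i)))"

definition copw :: "'a set \<Rightarrow> ('a \<Rightarrow> 'a \<Rightarrow> bool) \<Rightarrow> nat \<Rightarrow> nat" where
  "copw V E r = (LEAST k. k \<ge> 1 \<and> cops_win V E r k)"

text \<open>Strict part of a linear order R on V (R as in Order_Relation: reflexive on V).\<close>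
definition less_in :: "('a \<times> 'a) set \<Rightarrow> 'a \<Rightarrow> 'a \<Rightarrow> bool" where
  "less_in R w v \<longleftrightarrow> (w, v) \<in> R \<and> w \<noteq> v"

definition wreach :: "'a set \<Rightarrow> ('a \<Rightarrow> 'a \<Rightarrow> bool) \<Rightarrow> ('a \<times> 'a) set \<Rightarrow> nat \<Rightarrow> 'a \<Rightarrow> 'a \<Rightarrow> bool" where
  "wreach V E R r v w \<longleftrightarrow>
     (\<exists>p. gpath V E p \<and> hd p = v \<and> last p = w \<and> plen p \<le> r \<and>
          (\<forall>u\<in>set p. u \<noteq> w \<longrightarrow> less_in R w u))"

definition wcol :: "'a set \<Rightarrow> ('a \<Rightarrow> 'a \<Rightarrow> bool) \<Rightarrow> nat \<Rightarrow> nat" where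
  "wcol V E r = (LEAST k. \<exists>R. linear_order_on V R \<and>
      (\<forall>v\<in>V. card {w. less_in R w v \<and> wreach V E R r v w} \<le> k))"

definition adm :: "'a set \<Rightarrow> ('a \<Rightarrow> 'a \<Rightarrow> bool) \<Rightarrow> nat \<Rightarrow> nat" where
  "adm V E r = (LEAST k. \<exists>R. linear_order_on V R \<and>
      (\<forall>v\<in>V. \<forall>P. (\<forall>p\<in>P. gpath V E p \<and> hd p = v \<and> plen p \<le> r \<and> less_in R (last p) v) \<and>
                  (\<forall>p\<in>P. \<forall>q\<in>P. p \<noteq> q \<longrightarrow> set p \<inter> set q = {v})
                  \<longrightarrow> card P \<le> k))"

end

theory Submission imports Defs begin


definition walk :: "'a set \<Rightarrow> ('a \<Rightarrow> 'a \<Rightarrow> bool) \<Rightarrow> 'a list \<Rightarrow> bool" where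
  "walk V E p \<longleftrightarrow> p \<noteq> [] \<and> set p \<subseteq> V \<and> successively E p"

lemma walk_to_path:
  assumes "walk V E p"
  shows "\<exists>q. gpath V E q \<and> hd q = hd p \<and> last q = last p \<and> set q \<subseteq> set p \<and> length q \<le> length p"
  using assms
proof (induction "length p" arbitrary: p rule: less_induct)
  case less
  show ?case
  proof (cases "distinct p")
    case True
    then show ?thesis using less.prems by (auto simp: gpath_def walk_def)
  next
    case False
    then obtain xs ys zs y where p: "p = xs@[y]@ys@[y]@zs" using not_distinct_decomp by blast
    define q where "q = xs@[y]@zs"
    have s: "successively E ((xs@[y]@ys) @ ([y]@zs))" using less.prems unfolding p walk_def by simp
    then have s1: "successively E (xs@[y]@ys)" and s2: "successively E ([y]@zs)"
      by (simp_all only: successively_append_iff)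
    from s1 have s3: "successively E (xs@[y])"
      by (metis append.assoc successively_append_iff)
    have "successively E ((xs@[y]) @ zs)"
      using s3 s2 by (cases zs) (auto simp: successively_append_iff)
    then have "successively E (xs@[y]@zs)" by simp
    then have w: "walk V E q" using less.prems unfolding p q_def walk_def by auto
    have "length q < length p" unfolding p q_def by simp
    from less.hyps[OF this w] obtain q' where q': "gpath V E q' \<and> hd q' = hd q \<and> last q' = last q \<and> set q' \<subseteq> set q \<and> length q' \<le> length q" by blast
    have "hd q = hd p" unfolding p q_def by (cases xs) auto
    moreover have "last q = last p" unfolding p q_def by (cases zs) auto
    moreover have "set q \<subseteq> set p" unfolding p q_def by auto
    ultimately
    show ?thesis using q' \<open>length q < length p\<close> by (metis dual_order.trans less_imp_le_nat)
  qed
qed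

lemma walk_wreach:
  assumes "walk V E p" "hd p = v" "last p = w" "length p \<le> Suc d" "\<forall>u\<in>set p. (w,u)\<in>R"
  shows "wreach V E R d v w"
proof -
  obtain q where q: "gpath V E q \<and> hd q = hd p \<and> last q = last p \<and> set q \<subseteq> set p \<and> length q \<le> length p"
    using walk_to_path[OF assms(1)] by blast
  show ?thesis unfolding wreach_def
    apply (rule exI[of _ q])
    using q assms by (auto simp: plen_def less_in_def)
qed

lemma split_walk:
  assumes "walk V E p" "m \<in> set p"
  shows "\<exists>a b. walk V E a \<and> walk V E b \<and> hd a = hd p \<and> last a = m \<and> hd b = m \<and> last b = last p
     \<and> length a + length b = Suc (length p) \<and> set a \<subseteq> set p \<and> set b \<subseteq> set p"
proof -
  obtain xs ys where p: "p = xs @ m # ys" using split_list[OF assms(2)] by blast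
  show ?thesis
    apply (rule exI[of _ "xs @ [m]"], rule exI[of _ "m # ys"])
    using assms(1) unfolding p walk_def
    using successively_append_iff[of E "xs@[m]" ys] successively_append_iff[of E xs "m#ys"]
    by (cases xs; cases ys; auto)
qed

lemma walk_rev:
  assumes "walk V E p" "\<forall>x y. E x y \<longrightarrow> E y x"
  shows "walk V E (rev p) \<and> hd (rev p) = last p \<and> last (rev p) = hd p"
proof -
  have "successively (\<lambda>x y. E y x) p" using assms(1) unfolding walk_def
    by (metis (mono_tags, lifting) assms(2) successively_mono)
  then show ?thesis using assms(1) by (auto simp: walk_def hd_rev last_rev)
qed

lemma walk_concat:
  assumes "walk V E a" "walk V E b" "last a = hd b"
  shows "walk V E (a @ tl b) \<and> hd (a @ tl b) = hd a \<and> last (a @ tl b) = last b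
    \<and> length (a @ tl b) = length a + length b - 1 \<and> set (a @ tl b) \<subseteq> set a \<union> set b"
proof -
  obtain x bs where b: "b = x # bs" using assms(2) unfolding walk_def by (cases b) auto
  show ?thesis using assms unfolding b walk_def
    by (cases bs) (auto simp: successively_append_iff successively_Cons)
qed

lemma lin_min:
  assumes "finite A" "A \<noteq> {}" "A \<subseteq> V" "linear_order_on V R"
  shows "\<exists>m\<in>A. \<forall>u\<in>A. (m,u)\<in>R"
  using assms
proof (induction A rule: finite_ne_induct)
  case (singleton x)
  then show ?case by (auto simp: linear_order_on_def partial_order_on_def preorder_on_def refl_on_def)
next
  case (insert x F)
  then obtain m where m: "m\<in>F" "\<forall>u\<in>F. (m,u)\<in>R" by auto
  have lin: "trans R" "total_on V R" "refl_on V R" using insert.prems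
    by (auto simp: linear_order_on_def partial_order_on_def preorder_on_def)
  show ?case
  proof (cases "(x,m) \<in> R")
    case True
    then show ?thesis using m lin insert.prems by (auto simp: refl_on_def dest: transD)
  next
    case False
    then have "(m,x)\<in>R" using lin m insert by (auto simp: total_on_def refl_on_def)
    then show ?thesis using m by auto
  qed
qed



lemma wreach_in_V: "wreach V E R d v w \<Longrightarrow> w \<in> V \<and> v \<in> V"
  unfolding wreach_def gpath_def
  by (metis empty_iff hd_in_set last_in_set list.set(1) subsetD)

lemma gpath_walk: "gpath V E p \<Longrightarrow> walk V E p"
  by (simp add: gpath_def walk_def)

lemma walk_len: "walk V E p \<Longrightarrow> Suc 0 \<le> length p"
  by (cases p) (auto simp: walk_def)

lemma upper:
  assumes G: "simple_graph V E" and lin: "linear_order_on V R"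
    and bd: "\<forall>v\<in>V. card {w. less_in R w v \<and> wreach V E R (2*r) v w} \<le> k"
  shows "cops_win V E r (Suc k)"
proof -
  have finV: "finite V" and sym: "\<forall>x y. E x y \<longrightarrow> E y x" using G by (auto simp: simple_graph_def)
  have tr: "trans R" and tot: "total_on V R" and asy: "antisym R" and RV: "R \<subseteq> V \<times> V"
    using lin by (auto simp: linear_order_on_def partial_order_on_def preorder_on_def)
  define WR where "WR x = {w. wreach V E R (2*r) x w}" for x
  define \<sigma> where "\<sigma> h = (if h = [] then {} else WR (last h))" for h :: "'a list"
  have WRV: "WR x \<subseteq> V" for x unfolding WR_def using wreach_in_V by fast
  have WRc: "card (WR x) \<le> Suc k" for x
  proof (cases "x \<in> V")
    case True
    have "WR x \<subseteq> insert x {w. less_in R w x \<and> wreach V E R (2*r) x w}"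
    proof
      fix w assume "w \<in> WR x"
      then obtain p where p: "gpath V E p \<and> hd p = x \<and> last p = w \<and> plen p \<le> 2*r \<and>
          (\<forall>u\<in>set p. u \<noteq> w \<longrightarrow> less_in R w u)" unfolding WR_def wreach_def by blast
      have "x \<in> set p" using p by (metis gpath_def hd_in_set)
      then show "w \<in> insert x {w. less_in R w x \<and> wreach V E R (2*r) x w}"
        using p \<open>w \<in> WR x\<close> unfolding WR_def by auto
    qed
    moreover have fin: "finite {w. less_in R w x \<and> wreach V E R (2*r) x w}"
      by (rule rev_finite_subset[OF finV]) (auto dest: wreach_in_V)
    ultimately have "card (WR x) \<le> card (insert x {w. less_in R w x \<and> wreach V E R (2*r) x w})"
      by (intro card_mono) auto
    also have "\<dots> \<le> Suc (card {w. less_in R w x \<and> wreach V E R (2*r) x w})"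
      using fin by (simp add: card_insert_if)
    also have "\<dots> \<le> Suc k" using bd True by simp
    finally show ?thesis .
  next
    case False
    then have "WR x = {}" unfolding WR_def using wreach_in_V by fast
    then show ?thesis by simp
  qed
  show ?thesis unfolding cops_win_def
  proof (intro exI[of _ \<sigma>] conjI allI impI)
    fix h show "\<sigma> h \<subseteq> V" unfolding \<sigma>_def using WRV by auto
    show "card (\<sigma> h) \<le> Suc k" unfolding \<sigma>_def using WRc by auto
  next
    fix v :: "nat \<Rightarrow> 'a"
    assume play: "v 0 \<in> V \<and> (\<forall>i. robber_move V E r (cop_pos \<sigma> v i \<inter> cop_pos \<sigma> v (Suc i)) (v i) (v (Suc i)))"
    define S where "S i = cop_pos \<sigma> v i" for i
    have SS: "S (Suc i) = WR (v i)" for i unfolding S_def cop_pos_def \<sigma>_def by simp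
    have "\<forall>i. \<exists>p. gpath V E p \<and> hd p = v i \<and> last p = v (Suc i) \<and> plen p \<le> r \<and> set p \<inter> (S i \<inter> S (Suc i)) = {}"
      using play unfolding robber_move_def S_def by blast
    then obtain p where p: "\<And>i. gpath V E (p i) \<and> hd (p i) = v i \<and> last (p i) = v (Suc i) \<and> plen (p i) \<le> r \<and> set (p i) \<inter> (S i \<inter> S (Suc i)) = {}"
      by metis
    have pw: "walk V E (p i)" for i using p gpath_walk by blast
    have pl: "length (p i) \<le> Suc r" for i using p[of i] unfolding plen_def gpath_def by auto
    have "\<forall>i. \<exists>m\<in>set (p i). \<forall>u\<in>set (p i). (m,u)\<in>R"
    proof
      fix i show "\<exists>m\<in>set (p i). \<forall>u\<in>set (p i). (m,u)\<in>R"
        using lin_min[OF _ _ _ lin, of "set (p i)"] pw[of i] unfolding walk_def by auto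
    qed
    then obtain m where m: "\<And>i. m i \<in> set (p i)" "\<And>i u. u \<in> set (p i) \<Longrightarrow> (m i, u) \<in> R"
      by metis
    have mS: "m i \<in> S (Suc i) \<and> m i \<in> S (Suc (Suc i))" for i
    proof -
      obtain a b where ab: "walk V E a \<and> walk V E b \<and> hd a = hd (p i) \<and> last a = m i \<and> hd b = m i \<and> last b = last (p i)
     \<and> length a + length b = Suc (length (p i)) \<and> set a \<subseteq> set (p i) \<and> set b \<subseteq> set (p i)"
        using split_walk[OF pw m(1)] by blast
      have "wreach V E R (2*r) (v i) (m i)"
        apply (rule walk_wreach[of V E a])
        using ab p[of i] pl[of i] m(2) walk_len[of V E b] by auto
      moreover have "wreach V E R (2*r) (v (Suc i)) (m i)"
        apply (rule walk_wreach[of V E "rev b"])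
        using ab p[of i] pl[of i] m(2) walk_rev[of V E b] sym walk_len[of V E a] by auto
      ultimately show ?thesis unfolding SS WR_def by auto
    qed
    have step: "(m i, m (Suc i)) \<in> R \<and> m i \<noteq> m (Suc i)" for i
    proof -
      have ne: "m i \<noteq> m (Suc i)" using mS[of i] p[of "Suc i"] m(1)[of "Suc i"] by auto
      have "(m (Suc i), m i) \<notin> R"
      proof
        assume lt: "(m (Suc i), m i) \<in> R"
        obtain a b where ab: "walk V E a \<and> walk V E b \<and> hd a = hd (p (Suc i)) \<and> last a = m (Suc i) \<and> hd b = m (Suc i) \<and> last b = last (p (Suc i))
           \<and> length a + length b = Suc (length (p (Suc i))) \<and> set a \<subseteq> set (p (Suc i)) \<and> set b \<subseteq> set (p (Suc i))"
          using split_walk[OF pw m(1)] by blast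
        have lc: "last (p i) = hd a" using ab p[of i] p[of "Suc i"] by auto
        note c = walk_concat[OF pw[of i] _ lc]
        have "wreach V E R (2*r) (v i) (m (Suc i))"
          apply (rule walk_wreach[of V E "p i @ tl a"])
          using c ab p[of i] apply auto[3]
          using c ab pl[of i] pl[of "Suc i"] walk_len[of V E b] walk_len[of V E a] apply auto[1]
        proof
          fix u assume "u \<in> set (p i @ tl a)"
          then have "u \<in> set (p i) \<or> u \<in> set a" using c ab by auto
          then show "(m (Suc i), u) \<in> R"
            using m(2) lt tr ab by (meson subsetD transD)
        qed
        then have "m (Suc i) \<in> S (Suc i)" unfolding SS WR_def by auto
        then show False using mS[of "Suc i"] p[of "Suc i"] m(1)[of "Suc i"] by auto
      qed
      moreover have "m i \<in> V" "m (Suc i) \<in> V" using m(1) pw unfolding walk_def by auto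
      ultimately show ?thesis using tot ne unfolding total_on_def by blast
    qed
    have mono: "i < j \<Longrightarrow> (m i, m j) \<in> R \<and> m i \<noteq> m j" for i j
    proof (induction j)
      case 0 then show ?case by simp
    next
      case (Suc j)
      show ?case
      proof (cases "i = j")
        case True then show ?thesis using step by simp
      next
        case False
        then have ij: "(m i, m j) \<in> R" "m i \<noteq> m j" using Suc by auto
        have "(m i, m (Suc j)) \<in> R" using ij step[of j] tr by (meson transD)
        moreover have "m i \<noteq> m (Suc j)"
          using ij step[of j] asy by (metis antisymD)
        ultimately show ?thesis by simp
      qed
    qed
    have "inj m"
    proof (rule injI)
      fix x y assume "m x = m y"
      then show "x = y" using mono[of x y] mono[of y x] by (metis linorder_neqE_nat)
    qed
    moreover have "range m \<subseteq> V" using m(1) pw unfolding walk_def by auto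
    then have "finite (range m)" using finV by (rule finite_subset)
    then have "finite (UNIV :: nat set)" using \<open>inj m\<close> by (rule finite_imageD)
    then show "\<exists>i. v i \<in> cop_pos \<sigma> v i" by simp
  qed
qed



definition fam :: "'a set \<Rightarrow> ('a \<Rightarrow> 'a \<Rightarrow> bool) \<Rightarrow> nat \<Rightarrow> 'a \<Rightarrow> 'a set \<Rightarrow> 'a list set \<Rightarrow> bool" where
  "fam V E r v U P \<longleftrightarrow> (\<forall>p\<in>P. gpath V E p \<and> hd p = v \<and> plen p \<le> r \<and> last p \<in> U \<and> last p \<noteq> v) \<and>
     (\<forall>p\<in>P. \<forall>q\<in>P. p \<noteq> q \<longrightarrow> set p \<inter> set q = {v})"

lemma greedy:
  assumes "finite U" "U \<subseteq> V"
    and good: "\<forall>U'\<subseteq>V. U' \<noteq> {} \<longrightarrow> (\<exists>v\<in>U'. \<forall>P. fam V E r v U' P \<longrightarrow> card P \<le> k)"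
  shows "\<exists>R. linear_order_on U R \<and> (\<forall>v\<in>U. \<forall>P. (\<forall>p\<in>P. gpath V E p \<and> hd p = v \<and> plen p \<le> r \<and> less_in R (last p) v) \<and>
                  (\<forall>p\<in>P. \<forall>q\<in>P. p \<noteq> q \<longrightarrow> set p \<inter> set q = {v})
                  \<longrightarrow> card P \<le> k)"
  using assms(1,2)
proof (induction U rule: finite_psubset_induct)
  case (psubset U)
  show ?case
  proof (cases "U = {}")
    case True
    then show ?thesis
      by (intro exI[of _ "{}"]) (auto simp: linear_order_on_def partial_order_on_def preorder_on_def refl_on_def total_on_def)
  next
    case False
    then obtain v where v: "v \<in> U" "\<forall>P. fam V E r v U P \<longrightarrow> card P \<le> k" using good psubset.prems by blast
    have "U - {v} \<subset> U" using v by auto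
    from psubset.IH[OF this] psubset.prems obtain R' where R':
      "linear_order_on (U - {v}) R'" "\<forall>u\<in>U - {v}. \<forall>P. (\<forall>p\<in>P. gpath V E p \<and> hd p = u \<and> plen p \<le> r \<and> less_in R' (last p) u) \<and>
                  (\<forall>p\<in>P. \<forall>q\<in>P. p \<noteq> q \<longrightarrow> set p \<inter> set q = {u})
                  \<longrightarrow> card P \<le> k" by blast
    have R'sub: "R' \<subseteq> (U - {v}) \<times> (U - {v})" and tr: "trans R'" and asy: "antisym R'"
      and tot: "total_on (U - {v}) R'" and rf: "refl_on (U - {v}) R'"
      using R'(1) by (auto simp: linear_order_on_def partial_order_on_def preorder_on_def)
    define R where "R = R' \<union> (U \<times> {v})"
    have lin: "linear_order_on U R"
      unfolding linear_order_on_def partial_order_on_def preorder_on_def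
    proof (intro conjI)
      show "R \<subseteq> U \<times> U" unfolding R_def using R'sub v by auto
      show "refl_on U R" unfolding R_def using rf by (auto simp: refl_on_def)
      show "trans R" unfolding R_def trans_def
      proof (intro allI impI)
        fix x y z assume a: "(x, y) \<in> R' \<union> U \<times> {v}" "(y, z) \<in> R' \<union> U \<times> {v}"
        show "(x, z) \<in> R' \<union> U \<times> {v}"
        proof (cases "(x,y) \<in> R'")
          case True
          then have xU: "x \<in> U" using R'sub by blast
          show ?thesis
          proof (cases "(y,z) \<in> R'")
            case True
            then show ?thesis using \<open>(x,y) \<in> R'\<close> tr by (meson UnI1 transD)
          next
            case False
            then have "z = v" using a(2) by blast
            then show ?thesis using xU by blast
          qed
        next
          case False
          then have yv: "y = v" "x \<in> U" using a(1) by blast+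
          have "(y,z) \<notin> R'" using R'sub yv by blast
          then have "z = v" using a(2) by blast
          then show ?thesis using yv by blast
        qed
      qed
      show "antisym R" unfolding R_def antisym_def
      proof (intro allI impI)
        fix x y assume a: "(x, y) \<in> R' \<union> U \<times> {v}" "(y, x) \<in> R' \<union> U \<times> {v}"
        show "x = y"
        proof (cases "(x,y) \<in> R' \<and> (y,x) \<in> R'")
          case True then show ?thesis using asy by (meson antisymD)
        next
          case False
          then have "x = v \<or> y = v" using a by blast
          then show ?thesis using a R'sub by blast
        qed
      qed
      show "total_on U R" unfolding total_on_def
      proof (intro ballI impI)
        fix x y assume "x \<in> U" "y \<in> U" "x \<noteq> y"
        then show "(x, y) \<in> R \<or> (y, x) \<in> R"
          using tot unfolding R_def total_on_def by (cases "x = v"; cases "y = v") auto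
      qed
    qed
    show ?thesis
    proof (intro exI[of _ R] conjI lin ballI allI impI)
      fix u P assume u: "u \<in> U" and hP: "(\<forall>p\<in>P. gpath V E p \<and> hd p = u \<and> plen p \<le> r \<and> less_in R (last p) u) \<and>
                  (\<forall>p\<in>P. \<forall>q\<in>P. p \<noteq> q \<longrightarrow> set p \<inter> set q = {u})"
      show "card P \<le> k"
      proof (cases "u = v")
        case True
        have "last p \<in> U \<and> last p \<noteq> v" if "p \<in> P" for p
        proof -
          have "less_in R (last p) v" using hP that True by blast
          then have "(last p, v) \<in> R' \<union> U \<times> {v}" "last p \<noteq> v" unfolding less_in_def R_def by auto
          moreover have "(last p, v) \<notin> R'" using R'sub by blast
          ultimately show ?thesis by blast
        qed
        then have "fam V E r v U P" unfolding fam_def using hP True by simp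
        then show ?thesis using v by blast
      next
        case False
        have "\<forall>p\<in>P. less_in R' (last p) u" using hP False unfolding less_in_def R_def by auto
        then have h2: "(\<forall>p\<in>P. gpath V E p \<and> hd p = u \<and> plen p \<le> r \<and> less_in R' (last p) u) \<and>
                  (\<forall>p\<in>P. \<forall>q\<in>P. p \<noteq> q \<longrightarrow> set p \<inter> set q = {u})" using hP by simp
        have "u \<in> U - {v}" using u False by simp
        then show ?thesis using R'(2) h2 by simp
      qed
    qed
  qed
qed



lemma robber_step:
  assumes "U \<subseteq> V" "v \<in> U" "v \<notin> A" "finite B" "card B \<le> k" "fam V E r v U P" "k \<le> card P"
  shows "\<exists>w. w \<in> U \<and> w \<notin> B \<and> robber_move V E r (A \<inter> B) v w"
proof (cases "v \<in> B")
  case False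
  show ?thesis
    apply (rule exI[of _ v])
    using False assms unfolding robber_move_def
    by (intro conjI exI[of _ "[v]"]) (auto simp: gpath_def plen_def)
next
  case True
  have "\<exists>p\<in>P. set p \<inter> (B - {v}) = {}"
  proof (rule ccontr)
    assume "\<not> ?thesis"
    then have "\<forall>p\<in>P. \<exists>x. x \<in> set p \<inter> (B - {v})" by blast
    then obtain f where f: "\<forall>p\<in>P. f p \<in> set p \<inter> (B - {v})" by metis
    have "inj_on f P"
    proof (rule inj_onI)
      fix p q assume "p \<in> P" "q \<in> P" "f p = f q"
      show "p = q"
      proof (rule ccontr)
        assume "p \<noteq> q"
        then have "set p \<inter> set q = {v}" using assms(6) \<open>p \<in> P\<close> \<open>q \<in> P\<close> unfolding fam_def by blast
        moreover have "f p \<in> set p" "f q \<in> set q" "f p \<noteq> v" using f \<open>p \<in> P\<close> \<open>q \<in> P\<close> by auto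
        ultimately show False using \<open>f p = f q\<close> by auto
      qed
    qed
    moreover have "f ` P \<subseteq> B - {v}" using f by auto
    ultimately have "card P \<le> card (B - {v})" using assms(4) by (meson card_inj_on_le finite_Diff)
    moreover have "card (B - {v}) < card B" by (rule card_Diff1_less[OF assms(4) True])
    ultimately show False using assms(5,7) by linarith
  qed
  then obtain p where p: "p \<in> P" "set p \<inter> (B - {v}) = {}" by blast
  have pp: "gpath V E p \<and> hd p = v \<and> plen p \<le> r \<and> last p \<in> U \<and> last p \<noteq> v"
    using p assms(6) unfolding fam_def by blast
  have "last p \<in> set p" using pp by (simp add: gpath_def)
  then show ?thesis
    apply (intro exI[of _ "last p"])
    unfolding robber_move_def using pp p assms(3) by auto
qed

fun hist :: "'a \<Rightarrow> ('a list \<Rightarrow> 'a) \<Rightarrow> nat \<Rightarrow> 'a list" where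
  "hist u0 st 0 = [u0]"
| "hist u0 st (Suc n) = hist u0 st n @ [st (hist u0 st n)]"

lemma hist_len [simp]: "length (hist u0 st n) = Suc n"
  by (induction n) auto

lemma map_upt_Suc': "map g [0..<Suc m] = map g [0..<m] @ [g m]"
  by simp

lemma hist_map: "hist u0 st n = map (\<lambda>j. last (hist u0 st j)) [0..<Suc n]"
proof (induction n)
  case 0 show ?case by simp
next
  case (Suc n)
  have l: "last (hist u0 st (Suc n)) = st (hist u0 st n)" by simp
  have "hist u0 st (Suc n) = hist u0 st n @ [st (hist u0 st n)]" by simp
  also have "\<dots> = map (\<lambda>j. last (hist u0 st j)) [0..<Suc n] @ [last (hist u0 st (Suc n))]"
    using Suc.IH l by (metis (no_types, lifting))
  also have "\<dots> = map (\<lambda>j. last (hist u0 st j)) [0..<Suc (Suc n)]"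
    by (rule map_upt_Suc'[symmetric])
  finally show ?case .
qed


lemma robber:
  assumes cw: "cops_win V E r k" and UV: "U \<subseteq> V" and Une: "U \<noteq> {}"
    and fams: "\<forall>v\<in>U. \<exists>P. fam V E r v U P \<and> k \<le> card P"
    and finV: "finite V"
  shows False
proof -
  obtain \<sigma> where sb: "\<forall>h. \<sigma> h \<subseteq> V \<and> card (\<sigma> h) \<le> k" and
    win: "\<forall>v :: nat \<Rightarrow> 'a. v 0 \<in> V \<and>
           (\<forall>i. robber_move V E r (cop_pos \<sigma> v i \<inter> cop_pos \<sigma> v (Suc i)) (v i) (v (Suc i)))
           \<longrightarrow> (\<exists>i. v i \<in> cop_pos \<sigma> v i)"
    using cw unfolding cops_win_def by blast
  obtain u0 where u0: "u0 \<in> U" using Une by blast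
  define prevS where "prevS h = (if length h \<le> 1 then {} else \<sigma> (butlast h))" for h :: "'a list"
  define st where "st h = (SOME w. w \<in> U \<and> w \<notin> \<sigma> h \<and> robber_move V E r (prevS h \<inter> \<sigma> h) (last h) w)" for h
  define v where "v n = last (hist u0 st n)" for n
  have hm: "hist u0 st n = map v [0..<Suc n]" for n unfolding v_def by (rule hist_map)
  have cp1: "cop_pos \<sigma> v (Suc n) = \<sigma> (hist u0 st n)" for n
    unfolding cop_pos_def hm by simp
  have cp0: "cop_pos \<sigma> v n = prevS (hist u0 st n)" for n
  proof (cases n)
    case 0 then show ?thesis by (simp add: cop_pos_def prevS_def)
  next
    case (Suc m)
    then show ?thesis using cp1[of m] by (simp add: prevS_def)
  qed
  have good: "v n \<in> U \<Longrightarrow> v n \<notin> cop_pos \<sigma> v n \<Longrightarrow>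
      v (Suc n) \<in> U \<and> v (Suc n) \<notin> cop_pos \<sigma> v (Suc n) \<and>
      robber_move V E r (cop_pos \<sigma> v n \<inter> cop_pos \<sigma> v (Suc n)) (v n) (v (Suc n))" for n
  proof -
    assume a: "v n \<in> U" "v n \<notin> cop_pos \<sigma> v n"
    obtain P where P: "fam V E r (v n) U P" "k \<le> card P" using fams a by blast
    have fin: "finite (\<sigma> h)" for h using sb finV by (meson finite_subset)
    have "\<exists>w. w \<in> U \<and> w \<notin> \<sigma> (hist u0 st n) \<and> robber_move V E r (prevS (hist u0 st n) \<inter> \<sigma> (hist u0 st n)) (v n) w"
      using robber_step[OF UV a(1) _ fin[of "hist u0 st n"] _ P] a(2) sb unfolding cp0 by metis
    then have "st (hist u0 st n) \<in> U \<and> st (hist u0 st n) \<notin> \<sigma> (hist u0 st n) \<and>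
       robber_move V E r (prevS (hist u0 st n) \<inter> \<sigma> (hist u0 st n)) (last (hist u0 st n)) (st (hist u0 st n))"
      unfolding st_def v_def by (rule someI_ex)
    moreover have "v (Suc n) = st (hist u0 st n)" unfolding v_def by simp
    ultimately show ?thesis unfolding cp1 cp0[of n] v_def by simp
  qed
  have inv: "v n \<in> U \<and> v n \<notin> cop_pos \<sigma> v n" for n
  proof (induction n)
    case 0 then show ?case using u0 by (simp add: v_def cop_pos_def)
  next
    case (Suc n) then show ?case using good by blast
  qed
  have "v 0 \<in> V" using inv UV by blast
  moreover have "\<forall>i. robber_move V E r (cop_pos \<sigma> v i \<inter> cop_pos \<sigma> v (Suc i)) (v i) (v (Suc i))"
  proof
    fix i show "robber_move V E r (cop_pos \<sigma> v i \<inter> cop_pos \<sigma> v (Suc i)) (v i) (v (Suc i))"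
      using good[of i] inv[of i] by simp
  qed
  ultimately have "\<exists>i. v i \<in> cop_pos \<sigma> v i" using win by simp
  then show False using inv by simp
qed


theorem mainTheorem2:
  fixes V :: "'a set" and E :: "'a \<Rightarrow> 'a \<Rightarrow> bool" and r :: nat
  assumes "simple_graph V E"
  shows "adm V E r + 1 \<le> copw V E r \<and> copw V E r \<le> wcol V E (2 * r) + 1"
proof -
  have finV: "finite V" using assms by (simp add: simple_graph_def)
  obtain R0 where "well_order_on V R0" using well_order_on by blast
  then have lin0: "linear_order_on V R0" by (simp add: well_order_on_def)
  have "\<forall>v\<in>V. card {w. less_in R0 w v \<and> wreach V E R0 (2*r) v w} \<le> card V"
  proof
    fix v assume "v \<in> V"
    have "{w. less_in R0 w v \<and> wreach V E R0 (2*r) v w} \<subseteq> V" using wreach_in_V by fast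
    then show "card {w. less_in R0 w v \<and> wreach V E R0 (2*r) v w} \<le> card V"
      using finV by (rule card_mono[rotated])
  qed
  then have ex: "\<exists>R. linear_order_on V R \<and> (\<forall>v\<in>V. card {w. less_in R w v \<and> wreach V E R (2*r) v w} \<le> card V)"
    using lin0 by blast
  have "\<exists>R. linear_order_on V R \<and> (\<forall>v\<in>V. card {w. less_in R w v \<and> wreach V E R (2*r) v w} \<le> wcol V E (2*r))"
    unfolding wcol_def by (rule LeastI_ex) (use ex in blast)
  then obtain R where R: "linear_order_on V R" "\<forall>v\<in>V. card {w. less_in R w v \<and> wreach V E R (2*r) v w} \<le> wcol V E (2*r)"
    by blast
  have cw: "cops_win V E r (Suc (wcol V E (2*r)))" by (rule upper[OF assms R])
  have c1: "copw V E r \<le> wcol V E (2 * r) + 1" unfolding copw_def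
    by (rule Least_le) (simp add: cw)
  have c2: "1 \<le> copw V E r \<and> cops_win V E r (copw V E r)" unfolding copw_def
    by (rule LeastI[of _ "Suc (wcol V E (2*r))"]) (simp add: cw)
  define k where "k = copw V E r"
  have k1: "1 \<le> k" and cwk: "cops_win V E r k" using c2 k_def by auto
  have good: "\<forall>U'\<subseteq>V. U' \<noteq> {} \<longrightarrow> (\<exists>v\<in>U'. \<forall>P. fam V E r v U' P \<longrightarrow> card P \<le> k - 1)"
  proof (rule ccontr)
    assume "\<not> ?thesis"
    then obtain U' where U': "U' \<subseteq> V" "U' \<noteq> {}" "\<forall>v\<in>U'. \<exists>P. fam V E r v U' P \<and> \<not> card P \<le> k - 1"
      by auto
    have "\<forall>v\<in>U'. \<exists>P. fam V E r v U' P \<and> k \<le> card P"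
    proof
      fix v assume "v \<in> U'"
      then obtain P where "fam V E r v U' P" "\<not> card P \<le> k - 1" using U'(3) by blast
      then show "\<exists>P. fam V E r v U' P \<and> k \<le> card P" using k1 by (intro exI[of _ P]) auto
    qed
    then show False by (rule robber[OF cwk U'(1,2) _ finV])
  qed
  obtain R' where R': "linear_order_on V R'" "\<forall>v\<in>V. \<forall>P. (\<forall>p\<in>P. gpath V E p \<and> hd p = v \<and> plen p \<le> r \<and> less_in R' (last p) v) \<and>
                  (\<forall>p\<in>P. \<forall>q\<in>P. p \<noteq> q \<longrightarrow> set p \<inter> set q = {v})
                  \<longrightarrow> card P \<le> k - 1"
    using greedy[OF finV subset_refl good] by blast
  have "adm V E r \<le> k - 1" unfolding adm_def
    by (rule Least_le, rule exI[of _ R'], rule conjI, rule R'(1), rule R'(2))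
  then show ?thesis using c1 k1 k_def by simp
qed

end
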